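(* There exists $p\in\mathbb N$ such that $\int_G \sigma(g)^{-p}\,dg<\infty$.
   Context: Let $G$ be a connected simply connected solvable Lie group with Lie algebra $\mathfrak g$ ($m=\dim\mathfrak g$), and let $\mathfrak n$ be the nilradical of $\mathfrak g$. A root of $\mathfrak g$ is a linear form $\lambda$ on $\mathfrak g_{\mathbb C}$ for which there exist an ideal $\mathfrak a$ of $\mathfrak g_{\mathbb C}$ and some $w\notin\mathfrak a$ with $\mathrm{ad}(v)w-\lambda(v)w\in\mathfrak a$ for all $v\in\mathfrak g$. Fix $X\in\mathfrak g$ taking distinct values on distinct roots. Let $\mathfrak g_0=\{Y\in\mathfrak g:\mathrm{ad}(X)^mY=0\}$, and choose a subspace $\mathfrak t\subset\mathfrak g_0$ with $\mathfrak g=\mathfrak t\oplus\mathfrak n$. Realize $G$ as $\mathfrak t\times\mathfrak n$ with product $(t,x)(t',x')=(t+t',P(t,t')\cdot_{\mathrm{CBH}}x\cdot_{\mathrm{CBH}}e^{\mathrm{ad}\,t}x')$. Here $\cdot_{\mathrm{CBH}}$ is the Campbell–Baker–Hausdorff product and $P(T,T')=T\cdot_{\mathrm{CBH}}T'-T-T'$. The subgroup $N=\{0\}\times\mathfrak n$ is the nilradical. The right Haar measure is $dg=dt\,dn$ (Lebesgue). Fix Euclidean norms, with operator norm $\|\cdot\|_{\mathrm{op}}$ on $\mathfrak g$. Fix a symmetric compact neighbourhood $U$ of $e$. Let $|g|_G=\min\{j: g\in U^j\}$ (with $U^0=\{e\}$), and let $|n|_N=\min\{j: n\in (U\cap N)^j\}$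 for $n\in N$. Define $$\sigma(g)=\max(\|\mathrm{Ad}(g)\|_{\mathrm{op}},\|\mathrm{Ad}(g^{-1})\|_{\mathrm{op}})(1+|g|_G+|n|_N)\quad\text{for } g=(t,n).$$ *)

theory Defs
  imports "HOL-Analysis.Analysis"
begin

definition lie_algebra :: "('g::euclidean_space \<Rightarrow> 'g \<Rightarrow> 'g) \<Rightarrow> bool" where
  "lie_algebra br \<longleftrightarrow> bilinear br \<and> (\<forall>x. br x x = 0) \<and>
     (\<forall>x y z. br x (br y z) + br y (br z x) + br z (br x y) = 0)"

definition bracket_set :: "('g::real_vector \<Rightarrow> 'g \<Rightarrow> 'g) \<Rightarrow> 'g set \<Rightarrow> 'g set \<Rightarrow> 'g set" where
  "bracket_set br A B = span {br a b | a b. a \<in> A \<and> b \<in> B}"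

fun derived_series :: "('g::real_vector \<Rightarrow> 'g \<Rightarrow> 'g) \<Rightarrow> nat \<Rightarrow> 'g set" where
  "derived_series br 0 = UNIV"
| "derived_series br (Suc k) = bracket_set br (derived_series br k) (derived_series br k)"

definition solvable_lie :: "('g::real_vector \<Rightarrow> 'g \<Rightarrow> 'g) \<Rightarrow> bool" where
  "solvable_lie br \<longleftrightarrow> (\<exists>k. derived_series br k = {0})"

definition lie_ideal :: "('g::real_vector \<Rightarrow> 'g \<Rightarrow> 'g) \<Rightarrow> 'g set \<Rightarrow> bool" where
  "lie_ideal br I \<longleftrightarrow> subspace I \<and> (\<forall>x y. y \<in> I \<longrightarrow> br x y \<in> I)"

fun lower_central :: "('g::real_vector \<Rightarrow> 'g \<Rightarrow> 'g) \<Rightarrow> 'g set \<Rightarrow> nat \<Rightarrow> 'g set" where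
  "lower_central br I 0 = I"
| "lower_central br I (Suc k) = bracket_set br I (lower_central br I k)"

definition nilpotent_sub :: "('g::real_vector \<Rightarrow> 'g \<Rightarrow> 'g) \<Rightarrow> 'g set \<Rightarrow> bool" where
  "nilpotent_sub br I \<longleftrightarrow> (\<exists>k. lower_central br I k = {0})"

definition nilradical :: "('g::real_vector \<Rightarrow> 'g \<Rightarrow> 'g) \<Rightarrow> 'g set \<Rightarrow> bool" where
  "nilradical br N \<longleftrightarrow> lie_ideal br N \<and> nilpotent_sub br N \<and>
     (\<forall>I. lie_ideal br I \<and> nilpotent_sub br I \<longrightarrow> I \<subseteq> N)"

text \<open>An element \<open>(u,v)\<close> of \<open>'g \<times> 'g\<close> stands for \<open>u + i v \<in> g_C\<close>.\<close>
definition cscale :: "complex \<Rightarrow> 'g::real_vector \<times> 'g \<Rightarrow> 'g \<times> 'g" where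
  "cscale c z = (Re c *\<^sub>R fst z - Im c *\<^sub>R snd z, Re c *\<^sub>R snd z + Im c *\<^sub>R fst z)"

definition cbr :: "('g::real_vector \<Rightarrow> 'g \<Rightarrow> 'g) \<Rightarrow> 'g \<times> 'g \<Rightarrow> 'g \<times> 'g \<Rightarrow> 'g \<times> 'g" where
  "cbr br z w = (br (fst z) (fst w) - br (snd z) (snd w), br (fst z) (snd w) + br (snd z) (fst w))"

definition complex_subspace :: "('g::real_vector \<times> 'g) set \<Rightarrow> bool" where
  "complex_subspace A \<longleftrightarrow> 0 \<in> A \<and> (\<forall>z w. z \<in> A \<longrightarrow> w \<in> A \<longrightarrow> z + w \<in> A) \<and>
     (\<forall>c z. z \<in> A \<longrightarrow> cscale c z \<in> A)"

definition complex_ideal :: "('g::real_vector \<Rightarrow> 'g \<Rightarrow> 'g) \<Rightarrow> ('g \<times> 'g) set \<Rightarrow> bool" where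
  "complex_ideal br A \<longleftrightarrow> complex_subspace A \<and> (\<forall>z w. w \<in> A \<longrightarrow> cbr br z w \<in> A)"

text \<open>A root: a (complex-linear) form on \<open>g_C\<close>, represented by its real-linear restriction to \<open>g\<close>.\<close>
definition is_root :: "('g::real_vector \<Rightarrow> 'g \<Rightarrow> 'g) \<Rightarrow> ('g \<Rightarrow> complex) \<Rightarrow> bool" where
  "is_root br lam \<longleftrightarrow> linear lam \<and>
     (\<exists>A w. complex_ideal br A \<and> w \<notin> A \<and>
        (\<forall>v. cbr br (v, 0) w - cscale (lam v) w \<in> A))"

definition gzero :: "('g::euclidean_space \<Rightarrow> 'g \<Rightarrow> 'g) \<Rightarrow> 'g \<Rightarrow> 'g set" where
  "gzero br X = {Y. ((br X) ^^ DIM('g)) Y = 0}"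

definition expop :: "('g::real_normed_vector \<Rightarrow> 'g) \<Rightarrow> 'g \<Rightarrow> 'g" where
  "expop A y = (\<Sum>k. (1 / fact k) *\<^sub>R (A ^^ k) y)"

fun nest :: "('g::real_vector \<Rightarrow> 'g \<Rightarrow> 'g) \<Rightarrow> 'g list \<Rightarrow> 'g" where
  "nest br [] = 0"
| "nest br [a] = a"
| "nest br (a # b # w) = br a (nest br (b # w))"

definition dynkin_word :: "'g \<Rightarrow> 'g \<Rightarrow> (nat \<times> nat) list \<Rightarrow> 'g list" where
  "dynkin_word x y ps = concat (map (\<lambda>(r, s). replicate r x @ replicate s y) ps)"

definition dynkin_term :: "('g::real_vector \<Rightarrow> 'g \<Rightarrow> 'g) \<Rightarrow> 'g \<Rightarrow> 'g \<Rightarrow> nat \<Rightarrow> 'g" where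
  "dynkin_term br x y n =
     (\<Sum>k\<in>{1..n}. ((-1) ^ (k - 1) / real k) *\<^sub>R
        (\<Sum>ps \<in> {ps. length ps = k \<and> (\<forall>(r, s) \<in> set ps. 0 < r + s) \<and>
                     sum_list (map (\<lambda>(r, s). r + s) ps) = n}.
           (1 / (real n * prod_list (map (\<lambda>(r, s). fact r * fact s) ps))) *\<^sub>R
             nest br (dynkin_word x y ps)))"

definition cbh :: "('g::real_normed_vector \<Rightarrow> 'g \<Rightarrow> 'g) \<Rightarrow> 'g \<Rightarrow> 'g \<Rightarrow> 'g" where
  "cbh br x y = (\<Sum>n. dynkin_term br x y (Suc n))"

definition Pcbh :: "('g::real_normed_vector \<Rightarrow> 'g \<Rightarrow> 'g) \<Rightarrow> 'g \<Rightarrow> 'g \<Rightarrow> 'g" where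
  "Pcbh br t t' = cbh br t t' - t - t'"

definition gmult :: "('g::real_normed_vector \<Rightarrow> 'g \<Rightarrow> 'g) \<Rightarrow> 'g \<times> 'g \<Rightarrow> 'g \<times> 'g \<Rightarrow> 'g \<times> 'g" where
  "gmult br g h = (fst g + fst h,
      cbh br (cbh br (Pcbh br (fst g) (fst h)) (snd g)) (expop (br (fst g)) (snd h)))"

definition ginv :: "('g::real_normed_vector \<Rightarrow> 'g \<Rightarrow> 'g) \<Rightarrow> 'g set \<Rightarrow> 'g set \<Rightarrow> 'g \<times> 'g \<Rightarrow> 'g \<times> 'g" where
  "ginv br T N g = (THE h. h \<in> T \<times> N \<and> gmult br g h = (0, 0))"

text \<open>\<open>Ad(t,x) = e^(ad x) e^(ad t)\<close>, since \<open>(t,x) = exp_N(x) exp(t)\<close>.\<close>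
definition Adg :: "('g::real_normed_vector \<Rightarrow> 'g \<Rightarrow> 'g) \<Rightarrow> 'g \<times> 'g \<Rightarrow> 'g \<Rightarrow> 'g" where
  "Adg br g = expop (br (snd g)) \<circ> expop (br (fst g))"

fun setpow :: "('g::real_normed_vector \<Rightarrow> 'g \<Rightarrow> 'g) \<Rightarrow> ('g \<times> 'g) set \<Rightarrow> nat \<Rightarrow> ('g \<times> 'g) set" where
  "setpow br U 0 = {(0, 0)}"
| "setpow br U (Suc j) = {gmult br g u | g u. g \<in> setpow br U j \<and> u \<in> U}"

definition wordlen :: "('g::real_normed_vector \<Rightarrow> 'g \<Rightarrow> 'g) \<Rightarrow> ('g \<times> 'g) set \<Rightarrow> 'g \<times> 'g \<Rightarrow> nat" where
  "wordlen br U g = (LEAST j. g \<in> setpow br U j)"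

definition sym_compact_nbhd ::
  "('g::real_normed_vector \<Rightarrow> 'g \<Rightarrow> 'g) \<Rightarrow> 'g set \<Rightarrow> 'g set \<Rightarrow> ('g \<times> 'g) set \<Rightarrow> bool" where
  "sym_compact_nbhd br T N U \<longleftrightarrow> U \<subseteq> T \<times> N \<and> compact U \<and>
     (\<exists>V. open V \<and> (0, 0) \<in> V \<and> V \<inter> (T \<times> N) \<subseteq> U) \<and>
     (\<forall>g \<in> U. ginv br T N g \<in> U)"

definition sigma ::
  "('g::real_normed_vector \<Rightarrow> 'g \<Rightarrow> 'g) \<Rightarrow> 'g set \<Rightarrow> 'g set \<Rightarrow> ('g \<times> 'g) set \<Rightarrow> 'g \<times> 'g \<Rightarrow> real" where
  "sigma br T N U g =
     max (onorm (Adg br g)) (onorm (Adg br (ginv br T N g))) *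
     (1 + real (wordlen br U g) + real (wordlen br (U \<inter> ({0} \<times> N)) (0, snd g)))"

definition projT :: "'g::real_vector set \<Rightarrow> 'g set \<Rightarrow> 'g \<Rightarrow> 'g" where
  "projT T N z = (THE t. t \<in> T \<and> z - t \<in> N)"

end

theory Submission
  imports Defs "HOL-Probability.Sinc_Integral"
begin

context
  fixes br :: "'g::euclidean_space \<Rightarrow> 'g \<Rightarrow> 'g"
  assumes LA: "lie_algebra br"
begin

lemma br_bil: "bilinear br" using LA unfolding lie_algebra_def by auto

lemma br_lin_l: "linear (\<lambda>x. br x y)" using br_bil unfolding bilinear_def by auto
lemma br_lin_r: "linear (br x)" using br_bil unfolding bilinear_def by auto

lemma br_0l[simp]: "br 0 y = 0" using linear_0[OF br_lin_l] by simp
lemma br_0r[simp]: "br x 0 = 0" using linear_0[OF br_lin_r] by simp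
lemma br_xx[simp]: "br x x = 0" using LA unfolding lie_algebra_def by auto
lemma br_scale_l: "br (a *\<^sub>R x) y = a *\<^sub>R br x y" using linear_scale[OF br_lin_l] by simp
lemma br_scale_r: "br x (a *\<^sub>R y) = a *\<^sub>R br x y" using linear_scale[OF br_lin_r] by simp
lemma br_add_l: "br (x + z) y = br x y + br z y" using linear_add[OF br_lin_l] by simp
lemma br_add_r: "br x (y + z) = br x y + br x z" using linear_add[OF br_lin_r] by simp
lemma br_diff_l: "br (x - z) y = br x y - br z y" using linear_diff[OF br_lin_l] by simp
lemma br_diff_r: "br x (y - z) = br x y - br x z" using linear_diff[OF br_lin_r] by simp

lemma br_antisym: "br y x = - br x y"
proof -
  have "0 = br (x + y) (x + y)" by simp
  also have "\<dots> = br x y + br y x" unfolding br_add_l br_add_r by simp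
  finally have "br y x + br x y = 0" by (simp add: add.commute)
  then show ?thesis by (simp add: eq_neg_iff_add_eq_0)
qed

lemma nest_collinear:
  "set w \<subseteq> range (\<lambda>a. a *\<^sub>R v) \<Longrightarrow> 2 \<le> length w \<Longrightarrow> nest br w = 0"
proof (induction w)
  case (Cons a w)
  note prems = Cons.prems and IH = Cons.IH
  show ?case
  proof (cases w)
    case Nil
    then show ?thesis using Cons by simp
  next
    case (Cons b w')
    show ?thesis
    proof (cases w')
      case Nil
      from prems \<open>w = b # w'\<close> obtain s s' where "a = s *\<^sub>R v" "b = s' *\<^sub>R v" by auto
      then show ?thesis using Nil \<open>w = b # w'\<close> by (simp add: br_scale_l br_scale_r)
    next
      case (Cons c w'')
      then have "nest br w = 0" using IH prems \<open>w = b # w'\<close> by auto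
      then show ?thesis using \<open>w = b # w'\<close> by simp
    qed
  qed
qed auto

end

lemma length_dynkin_word: "length (dynkin_word x y ps) = sum_list (map (\<lambda>(r, s). r + s) ps)"
  unfolding dynkin_word_def by (induction ps) auto

lemma set_dynkin_word: "set (dynkin_word x y ps) \<subseteq> {x, y}"
  unfolding dynkin_word_def
proof (induction ps)
  case (Cons a ps)
  obtain r s where a: "a = (r,s)" by fastforce
  have "set (replicate r x) \<subseteq> {x,y}" "set (replicate s y) \<subseteq> {x,y}" by auto
  then show ?case using Cons unfolding a by (simp only: list.map concat.simps set_append prod.case Un_subset_iff)
qed simp

lemma dynkin_set_1:
  "{ps. length ps = 1 \<and> (\<forall>(r, s) \<in> set ps. 0 < r + s) \<and> sum_list (map (\<lambda>(r, s). r + s) ps) = (1::nat)}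
    = {[(1,0)], [(0,1)]}"
proof (safe, goal_cases)
  case (1 ps)
  then obtain r s where "ps = [(r,s)]" by (cases ps) (auto simp: length_Suc_conv)
  with 1 show ?case by auto
qed auto

lemma dynkin_term_1: "dynkin_term br x y 1 = x + y"
  unfolding dynkin_term_def using dynkin_set_1[simplified] by (simp add: dynkin_word_def)


lemma dynkin_term_zero:
  assumes "\<And>ps. sum_list (map (\<lambda>(r, s). r + s) ps) = n \<Longrightarrow> nest br (dynkin_word x y ps) = 0"
  shows "dynkin_term br x y n = 0"
  unfolding dynkin_term_def
  by (rule sum.neutral, rule ballI, subst sum.neutral) (auto simp: assms)

lemma cbh_finite:
  assumes "\<And>n. n \<ge> K \<Longrightarrow> dynkin_term br x y (Suc n) = 0"
  shows "cbh br x y = (\<Sum>n<K. dynkin_term br x y (Suc n))"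
  unfolding cbh_def by (rule suminf_finite) (auto simp: assms)

context
  fixes br :: "'g::euclidean_space \<Rightarrow> 'g \<Rightarrow> 'g"
  assumes LA: "lie_algebra br"
begin

lemma cbh_collinear: "cbh br (a *\<^sub>R v) (b *\<^sub>R v) = (a + b) *\<^sub>R v"
proof -
  have "cbh br (a *\<^sub>R v) (b *\<^sub>R v) = (\<Sum>n<1. dynkin_term br (a *\<^sub>R v) (b *\<^sub>R v) (Suc n))"
  proof (rule cbh_finite)
    fix n :: nat assume "1 \<le> n"
    show "dynkin_term br (a *\<^sub>R v) (b *\<^sub>R v) (Suc n) = 0"
    proof (rule dynkin_term_zero)
      fix ps assume "sum_list (map (\<lambda>(r, s). r + s) ps) = Suc n"
      then have "2 \<le> length (dynkin_word (a *\<^sub>R v) (b *\<^sub>R v) ps)"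
        using \<open>1 \<le> n\<close> by (simp add: length_dynkin_word)
      moreover have "set (dynkin_word (a *\<^sub>R v) (b *\<^sub>R v) ps) \<subseteq> range (\<lambda>c. c *\<^sub>R v)"
        using set_dynkin_word[of "a *\<^sub>R v" "b *\<^sub>R v" ps] by auto
      ultimately show "nest br (dynkin_word (a *\<^sub>R v) (b *\<^sub>R v) ps) = 0"
        using nest_collinear[OF LA] by blast
    qed
  qed
  also have "\<dots> = (a + b) *\<^sub>R v" using dynkin_term_1[of br "a *\<^sub>R v" "b *\<^sub>R v"] by (simp add: scaleR_add_left)
  finally show ?thesis .
qed

lemma cbh_0_0[simp]: "cbh br 0 0 = 0"
  using cbh_collinear[of 0 0 0] by simp

lemma cbh_0_l[simp]: "cbh br 0 x = x"
  using cbh_collinear[of 0 x 1] by simp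

lemma cbh_0_r[simp]: "cbh br x 0 = x"
  using cbh_collinear[of 1 x 0] by simp

lemma Pcbh_collinear: "Pcbh br (a *\<^sub>R v) (b *\<^sub>R v) = 0"
  unfolding Pcbh_def cbh_collinear by (simp add: scaleR_add_left)

lemma Pcbh_0_0[simp]: "Pcbh br 0 0 = 0"
  unfolding Pcbh_def by simp

lemma pow_br0: "((br 0) ^^ Suc k) y = 0"
  by (induction k) (auto simp: br_0l[OF LA])

lemma expop_finite:
  assumes "\<And>k. k \<ge> K \<Longrightarrow> (A ^^ k) y = 0"
  shows "expop A y = (\<Sum>k<K. (1 / fact k) *\<^sub>R (A ^^ k) y)"
  unfolding expop_def by (rule suminf_finite) (auto simp: assms)

lemma expop_br0[simp]: "expop (br 0) y = y"
proof -
  have "expop (br 0) y = (\<Sum>k<1. (1 / fact k) *\<^sub>R ((br 0) ^^ k) y)"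
    by (rule expop_finite) (metis Suc_le_D pow_br0 Suc_eq_plus1 add.commute One_nat_def)
  then show ?thesis by simp
qed

lemma pow_br_0: "((br t) ^^ k) 0 = 0"
  by (induction k) (auto simp: br_0r[OF LA])

lemma expop_0[simp]: "expop (br t) 0 = 0"
  unfolding expop_def pow_br_0 by simp

end

locale nilp =
  fixes br :: "'g::euclidean_space \<Rightarrow> 'g \<Rightarrow> 'g" and N :: "'g set"
  assumes LA: "lie_algebra br" and NR: "nilradical br N"
begin

abbreviation "C \<equiv> lower_central br N"

lemma N_ideal: "lie_ideal br N" using NR unfolding nilradical_def by auto
lemma N_sub: "subspace N" using N_ideal unfolding lie_ideal_def by auto
lemma N_br_r: "y \<in> N \<Longrightarrow> br x y \<in> N" using N_ideal unfolding lie_ideal_def by auto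
lemma N_br_l: "x \<in> N \<Longrightarrow> br x y \<in> N"
  using N_br_r[of x y] br_antisym[OF LA, of y x] subspace_neg[OF N_sub] by (metis minus_minus)

lemma C_subspace: "subspace (C i)"
  by (cases i) (auto simp: N_sub bracket_set_def subspace_span)

lemma C_N: "C i \<subseteq> N"
proof (cases i)
  case (Suc j)
  have "{br a b | a b. a \<in> N \<and> b \<in> C j} \<subseteq> N" using N_br_l by auto
  then show ?thesis using Suc by (simp add: bracket_set_def span_minimal N_sub)
qed simp

lemma C_br: "a \<in> N \<Longrightarrow> c \<in> C i \<Longrightarrow> br a c \<in> C (Suc i)"
  by (auto simp: bracket_set_def intro!: span_base)

lemma C_br': "a \<in> N \<Longrightarrow> c \<in> C i \<Longrightarrow> br c a \<in> C (Suc i)"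
  using C_br[of a c i] br_antisym[OF LA, of c a] subspace_neg[OF C_subspace] by metis

lemma C_dec: "C (Suc i) \<subseteq> C i"
proof (induction i)
  case 0
  then show ?case using C_N[of 1] by simp
next
  case (Suc i)
  have "{br a b | a b. a \<in> N \<and> b \<in> C (Suc i)} \<subseteq> {br a b | a b. a \<in> N \<and> b \<in> C i}"
    using Suc by blast
  then show ?case by (simp only: lower_central.simps bracket_set_def) (rule span_mono)
qed

lemma C_mono: "i \<le> j \<Longrightarrow> C j \<subseteq> C i"
  by (induction j rule: dec_induct) (use C_dec in auto)

lemma nest_in_C_aux: "set (a # w) \<subseteq> N \<Longrightarrow> nest br (a # w) \<in> C (length w)"
proof (induction w arbitrary: a)
  case Nil
  then show ?case by simp
next
  case (Cons b w)
  then have "nest br (b # w) \<in> C (length w)" by simp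
  then show ?case using Cons.prems C_br[of a "nest br (b # w)" "length w"] by simp
qed

lemma nest_in_C: "set w \<subseteq> N \<Longrightarrow> w \<noteq> [] \<Longrightarrow> nest br w \<in> C (length w - 1)"
  using nest_in_C_aux by (cases w) auto

lemma nest_in_N: "set w \<subseteq> N \<Longrightarrow> nest br w \<in> N"
  using nest_in_C[of w] C_N by (cases "w = []") (auto simp: subspace_0[OF N_sub])

lemma list_all2_setN: "list_all2 P xs ys \<Longrightarrow> (\<And>x y. P x y \<Longrightarrow> x \<in> N) \<Longrightarrow> set xs \<subseteq> N"
  by (induction xs arbitrary: ys) (auto simp: list_all2_Cons1)

lemma nest_diff_aux:
  assumes "list_all2 (\<lambda>a a'. a \<in> N \<and> a' \<in> N \<and> a - a' \<in> C i) (a # w) (a' # w')"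
  shows "nest br (a # w) - nest br (a' # w') \<in> C (if w = [] then i else Suc i)"
  using assms
proof (induction w arbitrary: a a' w')
  case Nil
  then show ?case by simp
next
  case (Cons b v)
  from Cons.prems obtain b' v' where w': "w' = b' # v'" by (cases w') auto
  have IH: "nest br (b # v) - nest br (b' # v') \<in> C (if v = [] then i else Suc i)"
    using Cons.IH[of b b' v'] Cons.prems w' by simp
  have "nest br (b # v) - nest br (b' # v') \<in> C i"
    using IH C_dec[of i] by (auto split: if_splits)
  moreover have "a' \<in> N" "a - a' \<in> C i" using Cons.prems by auto
  moreover have "list_all2 (\<lambda>a a'. a \<in> N \<and> a' \<in> N \<and> a - a' \<in> C i) (b # v) (b' # v')"
    using Cons.prems w' by simp
  then have "set (b # v) \<subseteq> N" by (rule list_all2_setN) auto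
  ultimately have 1: "br (a - a') (nest br (b # v)) \<in> C (Suc i)"
     and 2: "br a' (nest br (b # v) - nest br (b' # v')) \<in> C (Suc i)"
    using C_br C_br' nest_in_N by auto
  have "nest br (a # b # v) - nest br (a' # b' # v') =
      br (a - a') (nest br (b # v)) + br a' (nest br (b # v) - nest br (b' # v'))"
    by (simp add: br_diff_l[OF LA] br_diff_r[OF LA])
  moreover have "br (a - a') (nest br (b # v)) + br a' (nest br (b # v) - nest br (b' # v')) \<in> C (Suc i)"
    using 1 2 subspace_add[OF C_subspace] by blast
  ultimately show ?case using w' by (simp del: lower_central.simps)
qed

lemma nest_diff:
  assumes "list_all2 (\<lambda>a a'. a \<in> N \<and> a' \<in> N \<and> a - a' \<in> C i) w w'" "2 \<le> length w"
  shows "nest br w - nest br w' \<in> C (Suc i)"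
proof -
  obtain a v where w0: "w = a # v" using assms(2) by (cases w) auto
  then have w: "w = a # v" "v \<noteq> []" using assms(2) by auto
  from assms(1) w obtain a' v' where "w' = a' # v'" by (cases w') auto
  then show ?thesis using nest_diff_aux[where a=a and w=v and a'=a' and w'=v'] assms w by simp
qed

end

lemma dynkin_word_rel:
  assumes "R x x'" "R y y"
  shows "list_all2 R (dynkin_word x y ps) (dynkin_word x' y ps)"
proof (induction ps)
  case Nil
  then show ?case by (simp add: dynkin_word_def)
next
  case (Cons p ps)
  obtain r s where p: "p = (r, s)" by fastforce
  have "list_all2 R (replicate r x) (replicate r x')" "list_all2 R (replicate s y) (replicate s y)"
    using assms by (auto simp: list_all2_conv_all_nth)
  then show ?case using Cons unfolding dynkin_word_def p
    by (simp only: list.map concat.simps prod.case list_all2_appendI)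
qed

context nilp
begin

lemma dyn_in_C:
  assumes "x \<in> N" "y \<in> N" "1 \<le> n"
  shows "dynkin_term br x y n \<in> C (n - 1)"
  unfolding dynkin_term_def
proof (intro subspace_sum[OF C_subspace] subspace_scale[OF C_subspace], elim CollectE conjE)
  fix k ps assume "sum_list (map (\<lambda>(r, s). r + s) ps) = n"
  then have "length (dynkin_word x y ps) = n" by (simp add: length_dynkin_word)
  moreover have "set (dynkin_word x y ps) \<subseteq> N" using set_dynkin_word[of x y ps] assms by auto
  moreover have "dynkin_word x y ps \<noteq> []" using \<open>length (dynkin_word x y ps) = n\<close> assms(3) by auto
  ultimately show "nest br (dynkin_word x y ps) \<in> C (n - 1)"
    using nest_in_C[of "dynkin_word x y ps"] by simp
qed

lemma dyn_in_N: "x \<in> N \<Longrightarrow> y \<in> N \<Longrightarrow> 1 \<le> n \<Longrightarrow> dynkin_term br x y n \<in> N"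
  using dyn_in_C C_N by blast

definition kk where "kk = (SOME k. C k = {0})"

lemma C_kk: "C kk = {0}"
  unfolding kk_def by (rule someI_ex) (use NR in \<open>auto simp: nilradical_def nilpotent_sub_def\<close>)

lemma C_zero: "kk \<le> j \<Longrightarrow> C j = {0}"
  using C_mono[of kk j] C_kk subspace_0[OF C_subspace, of j] by auto

lemma dyn_zero: "x \<in> N \<Longrightarrow> y \<in> N \<Longrightarrow> kk < n \<Longrightarrow> dynkin_term br x y n = 0"
  using dyn_in_C[of x y n] C_zero[of "n - 1"] by auto

definition S where "S x y = (\<Sum>n<kk. dynkin_term br x y (n + 2))"

lemma cbh_N: assumes "x \<in> N" "y \<in> N" shows "cbh br x y = x + y + S x y"
proof -
  have "cbh br x y = (\<Sum>n<Suc kk. dynkin_term br x y (Suc n))"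
    by (rule cbh_finite) (use dyn_zero assms in auto)
  also have "\<dots> = dynkin_term br x y 1 + (\<Sum>n<kk. dynkin_term br x y (Suc (Suc n)))"
    by (subst sum.lessThan_Suc_shift) simp
  also have "\<dots> = x + y + S x y" using dynkin_term_1[of br x y] by (simp add: S_def numeral_2_eq_2)
  finally show ?thesis .
qed

lemma S_in_N: "x \<in> N \<Longrightarrow> y \<in> N \<Longrightarrow> S x y \<in> N"
  unfolding S_def by (intro subspace_sum[OF N_sub] dyn_in_N) auto

lemma cbh_in_N: "x \<in> N \<Longrightarrow> y \<in> N \<Longrightarrow> cbh br x y \<in> N"
  using cbh_N S_in_N subspace_add[OF N_sub] by auto

lemma dyn_diff:
  assumes "x \<in> N" "x' \<in> N" "y \<in> N" "x - x' \<in> C i" "2 \<le> n"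
  shows "dynkin_term br x y n - dynkin_term br x' y n \<in> C (Suc i)"
  unfolding dynkin_term_def sum_subtractf[symmetric] scaleR_diff_right[symmetric]
proof (intro subspace_sum[OF C_subspace] subspace_scale[OF C_subspace], elim CollectE conjE)
  fix k ps assume "sum_list (map (\<lambda>(r, s). r + s) ps) = n"
  then have "2 \<le> length (dynkin_word x y ps)" using assms by (simp add: length_dynkin_word)
  moreover have "list_all2 (\<lambda>a a'. a \<in> N \<and> a' \<in> N \<and> a - a' \<in> C i) (dynkin_word x y ps) (dynkin_word x' y ps)"
    by (rule dynkin_word_rel) (use assms subspace_0[OF C_subspace] in auto)
  ultimately show "nest br (dynkin_word x y ps) - nest br (dynkin_word x' y ps) \<in> C (Suc i)"
    using nest_diff by blast
qed

lemma S_diff: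
  assumes "x \<in> N" "x' \<in> N" "y \<in> N" "x - x' \<in> C i"
  shows "S x y - S x' y \<in> C (Suc i)"
  unfolding S_def sum_subtractf[symmetric]
  by (intro subspace_sum[OF C_subspace] dyn_diff) (use assms in auto)

end

lemma nest_bound_aux:
  assumes "\<And>a b. norm (br a b) \<le> K * norm a * norm b" "1 \<le> K" "0 \<le> M"
  shows "\<forall>a\<in>set (a # w). norm a \<le> M \<Longrightarrow> norm (nest br (a # w)) \<le> (K * M) ^ Suc (length w)"
proof (induction w arbitrary: a)
  case Nil
  have "M \<le> K * M" using assms(2,3) by (simp add: mult_right_mono[of 1 K M, simplified])
  then show ?case using Nil by simp
next
  case (Cons b w)
  have IH: "norm (nest br (b # w)) \<le> (K * M) ^ Suc (length w)" using Cons by simp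
  have "norm (nest br (a # b # w)) \<le> K * norm a * norm (nest br (b # w))" using assms(1) by simp
  also have "\<dots> \<le> K * M * (K * M) ^ Suc (length w)"
    using IH Cons.prems assms(2,3)
    by (intro mult_mono mult_left_mono) auto
  finally show ?case by simp
qed

lemma nest_bound:
  assumes "\<And>a b. norm (br a b) \<le> K * norm a * norm b" "1 \<le> K" "0 \<le> M"
    and "\<forall>a\<in>set w. norm a \<le> M"
  shows "norm (nest br w) \<le> (K * M) ^ length w"
  using nest_bound_aux[OF assms(1-3)] assms(4) by (cases w) auto

lemma dyn_bound:
  assumes "\<And>a b. norm (br a b) \<le> K * norm a * norm b" "1 \<le> K"
  shows "\<exists>D\<ge>0. \<forall>x y. norm (dynkin_term br x y n) \<le> D * (K * (1 + norm x + norm y)) ^ n"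
proof -
  define P where "P k = {ps. length ps = k \<and> (\<forall>(r, s) \<in> set ps. 0 < r + s) \<and>
                     sum_list (map (\<lambda>(r, s). r + s) ps) = n}" for k
  define c where "c ps = 1 / (real n * prod_list (map (\<lambda>(r, s). fact r * fact s) ps))" for ps :: "(nat \<times> nat) list"
  define D where "D = (\<Sum>k\<in>{1..n}. \<bar>(-1) ^ (k - 1) / real k\<bar> * (\<Sum>ps\<in>P k. \<bar>c ps\<bar>))"
  have D0: "D \<ge> 0" unfolding D_def by (intro sum_nonneg mult_nonneg_nonneg) auto
  have "norm (dynkin_term br x y n) \<le> D * (K * (1 + norm x + norm y)) ^ n" for x y
  proof -
    define M where "M = 1 + norm x + norm y"
    have M0: "0 \<le> M" unfolding M_def by simp
    have nb: "norm (nest br (dynkin_word x y ps)) \<le> (K * M) ^ n" if "ps \<in> P k" for k ps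
    proof -
      have "length (dynkin_word x y ps) = n" using that by (simp add: P_def length_dynkin_word)
      moreover have "\<forall>a\<in>set (dynkin_word x y ps). norm a \<le> M"
        using set_dynkin_word[of x y ps] unfolding M_def by auto
      ultimately show ?thesis using nest_bound[OF assms M0] by metis
    qed
    have "dynkin_term br x y n = (\<Sum>k\<in>{1..n}. ((-1) ^ (k - 1) / real k) *\<^sub>R
        (\<Sum>ps\<in>P k. c ps *\<^sub>R nest br (dynkin_word x y ps)))"
      unfolding dynkin_term_def P_def c_def by simp
    also have "norm \<dots> \<le> (\<Sum>k\<in>{1..n}. \<bar>(-1) ^ (k - 1) / real k\<bar> * (\<Sum>ps\<in>P k. \<bar>c ps\<bar> * (K * M) ^ n))"
    proof (rule order.trans[OF norm_sum], rule sum_mono)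
      fix k assume "k \<in> {1..n}"
      have "norm (\<Sum>ps\<in>P k. c ps *\<^sub>R nest br (dynkin_word x y ps)) \<le> (\<Sum>ps\<in>P k. \<bar>c ps\<bar> * (K * M) ^ n)"
        by (rule order.trans[OF norm_sum], rule sum_mono) (use nb in \<open>auto intro: mult_left_mono\<close>)
      then show "norm (((-1) ^ (k - 1) / real k) *\<^sub>R (\<Sum>ps\<in>P k. c ps *\<^sub>R nest br (dynkin_word x y ps)))
          \<le> \<bar>(-1) ^ (k - 1) / real k\<bar> * (\<Sum>ps\<in>P k. \<bar>c ps\<bar> * (K * M) ^ n)"
        by (simp only: norm_scaleR) (rule mult_left_mono, auto)
    qed
    also have "\<dots> = D * (K * M) ^ n"
      unfolding D_def sum_distrib_right by (simp add: sum_distrib_right mult.assoc)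
    finally show ?thesis unfolding M_def .
  qed
  then show ?thesis using D0 by blast
qed

context nilp
begin

lemma S_bound: "\<exists>E\<ge>0. \<forall>x y. norm (S x y) \<le> E * (1 + norm x + norm y) ^ (kk + 1)"
proof -
  have "bounded_bilinear br" using br_bil[OF LA] bilinear_conv_bounded_bilinear by blast
  then obtain K0 where K0: "\<And>a b. norm (br a b) \<le> norm a * norm b * K0"
    using bounded_bilinear.bounded by blast
  define K where "K = max 1 K0"
  have K1: "1 \<le> K" unfolding K_def by simp
  have Kb: "norm (br a b) \<le> K * norm a * norm b" for a b
  proof -
    have "norm (br a b) \<le> norm a * norm b * K0" by (rule K0)
    also have "\<dots> \<le> norm a * norm b * K" unfolding K_def by (intro mult_left_mono) auto
    finally show ?thesis by (simp add: ac_simps)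
  qed
  have "\<forall>n. \<exists>D\<ge>0. \<forall>x y. norm (dynkin_term br x y n) \<le> D * (K * (1 + norm x + norm y)) ^ n"
    using dyn_bound[OF Kb K1] by blast
  then obtain Df where Df: "\<And>n. Df n \<ge> 0"
    "\<And>n x y. norm (dynkin_term br x y n) \<le> Df n * (K * (1 + norm x + norm y)) ^ n"
    by metis
  define E where "E = (\<Sum>n<kk. Df (n + 2) * K ^ (kk + 1))"
  have E0: "E \<ge> 0" unfolding E_def using Df(1) K1 by (intro sum_nonneg) auto
  have "norm (S x y) \<le> E * (1 + norm x + norm y) ^ (kk + 1)" for x y
  proof -
    define M where "M = 1 + norm x + norm y"
    have M1: "1 \<le> M" unfolding M_def by simp
    have "norm (S x y) \<le> (\<Sum>n<kk. norm (dynkin_term br x y (n + 2)))"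
      unfolding S_def by (rule norm_sum)
    also have "\<dots> \<le> (\<Sum>n<kk. Df (n + 2) * K ^ (kk + 1) * M ^ (kk + 1))"
    proof (rule sum_mono)
      fix n assume "n \<in> {..<kk}"
      then have le: "n + 2 \<le> kk + 1" by simp
      have KM: "1 \<le> K * M" using K1 M1 by (metis mult_mono' one_le_mult_iff order.trans zero_le_one mult_1_right)
      have "norm (dynkin_term br x y (n + 2)) \<le> Df (n + 2) * (K * M) ^ (n + 2)"
        using Df(2) unfolding M_def by blast
      also have "\<dots> \<le> Df (n + 2) * (K * M) ^ (kk + 1)"
        using KM le Df(1) by (intro mult_left_mono power_increasing) (auto simp: one_le_mult_iff)
      finally show "norm (dynkin_term br x y (n + 2)) \<le> Df (n + 2) * K ^ (kk + 1) * M ^ (kk + 1)"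
        by (simp add: power_mult_distrib ac_simps)
    qed
    also have "\<dots> = E * M ^ (kk + 1)" unfolding E_def by (simp add: sum_distrib_right)
    finally show ?thesis unfolding M_def .
  qed
  then show ?thesis using E0 by blast
qed

end


locale nilpW = nilp br N for br :: "'g::euclidean_space \<Rightarrow> 'g \<Rightarrow> 'g" and N +
  fixes W :: "('g::euclidean_space \<times> 'g) set" and R :: real
  assumes W: "\<And>u. u \<in> W \<Longrightarrow> fst u = 0 \<and> snd u \<in> N \<and> norm (snd u) \<le> R"
    and R0: "0 \<le> R"
begin

lemma gmult_N: "x \<in> N \<Longrightarrow> gmult br (0, x) (0, u) = (0, cbh br x u)"
  unfolding gmult_def using LA by simp

definition E where "E = (SOME E. E \<ge> 0 \<and> (\<forall>x y. norm (S x y) \<le> E * (1 + norm x + norm y) ^ (kk + 1)))"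

lemma E: "E \<ge> 0" "norm (S x y) \<le> E * (1 + norm x + norm y) ^ (kk + 1)"
  using someI_ex[OF S_bound] unfolding E_def[symmetric] by auto

fun b :: "nat \<Rightarrow> nat \<Rightarrow> real" where
  "b 0 j = 0"
| "b (Suc i) 0 = 0"
| "b (Suc i) (Suc j) = b (Suc i) j + R + E * (1 + b i j + R) ^ (kk + 1)"

lemma b_nonneg: "0 \<le> b i j"
  by (induction i j rule: b.induct) (use R0 E(1) in auto)

lemma b_zero[simp]: "b i 0 = 0" by (cases i) auto

lemma setpowW:
  "g \<in> setpow br W j \<Longrightarrow> fst g = 0 \<and> snd g \<in> N \<and> (\<forall>i. \<exists>c\<in>C i. norm (snd g - c) \<le> b i j)"
proof (induction j arbitrary: g)
  case 0
  then show ?case using subspace_0[OF N_sub] subspace_0[OF C_subspace] by force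
next
  case (Suc j)
  from Suc.prems obtain h u where g: "g = gmult br h u" and h: "h \<in> setpow br W j" and u: "u \<in> W"
    by auto
  from Suc.IH[OF h] have h0: "fst h = 0" "snd h \<in> N" and hc: "\<forall>i. \<exists>c\<in>C i. norm (snd h - c) \<le> b i j"
    by auto
  define x where "x = snd h"
  have u0: "fst u = 0" "snd u \<in> N" "norm (snd u) \<le> R" using W[OF u] by auto
  have gx: "g = (0, cbh br x (snd u))"
    using gmult_N[of x "snd u"] h0 u0 unfolding g x_def by (metis prod.collapse)
  have xN: "x \<in> N" using h0 x_def by simp
  have cbhN: "cbh br x (snd u) \<in> N" using cbh_in_N xN u0 by auto
  have "\<exists>c\<in>C i. norm (cbh br x (snd u) - c) \<le> b i (Suc j)" for i
  proof (cases i)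
    case 0
    then show ?thesis using cbhN by (intro bexI[of _ "cbh br x (snd u)"]) auto
  next
    case (Suc i')
    from hc obtain c1 where c1: "c1 \<in> C (Suc i')" "norm (x - c1) \<le> b (Suc i') j"
      unfolding x_def by blast
    from hc obtain c0 where c0: "c0 \<in> C i'" "norm (x - c0) \<le> b i' j"
      unfolding x_def by blast
    define x' where "x' = x - c0"
    have x'N: "x' \<in> N" unfolding x'_def using xN c0 C_N subspace_diff[OF N_sub] by blast
    have dS: "S x (snd u) - S x' (snd u) \<in> C (Suc i')"
      using S_diff[OF xN x'N u0(2)] c0 unfolding x'_def by simp
    define c where "c = c1 + (S x (snd u) - S x' (snd u))"
    have cC: "c \<in> C (Suc i')" unfolding c_def using c1 dS subspace_add[OF C_subspace] by blast
    have eq: "cbh br x (snd u) - c = (x - c1) + snd u + S x' (snd u)"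
      unfolding c_def cbh_N[OF xN u0(2)] by (simp add: algebra_simps)
    have "norm (cbh br x (snd u) - c) \<le> norm (x - c1) + norm (snd u) + norm (S x' (snd u))"
      unfolding eq using norm_triangle_ineq[of "(x - c1) + snd u" "S x' (snd u)"]
        norm_triangle_ineq[of "x - c1" "snd u"] by linarith
    also have "\<dots> \<le> b (Suc i') j + R + E * (1 + b i' j + R) ^ (kk + 1)"
    proof -
      have "(1 + norm x' + norm (snd u)) ^ (kk + 1) \<le> (1 + b i' j + R) ^ (kk + 1)"
        using c0 u0 unfolding x'_def by (intro power_mono) auto
      then have "norm (S x' (snd u)) \<le> E * (1 + b i' j + R) ^ (kk + 1)"
        using E(2)[of x' "snd u"] E(1) by (meson mult_left_mono order.trans)
      then show ?thesis using c1 u0 by linarith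
    qed
    finally show ?thesis using cC Suc by auto
  qed
  then show ?case using gx cbhN by simp
qed

lemma b_Suc_mono: "b i j \<le> b i (Suc j)"
  by (cases i) (use R0 E(1) b_nonneg in auto)

lemma b_mono: "j \<le> j' \<Longrightarrow> b i j \<le> b i j'"
  by (rule lift_Suc_mono_le[of "b i"]) (use b_Suc_mono in auto)

lemma b_poly: "\<exists>A e. 0 \<le> A \<and> (\<forall>j. b i j \<le> A * (1 + real j) ^ e)"
proof (induction i)
  case 0
  then show ?case by (intro exI[of _ 0]) auto
next
  case (Suc i)
  then obtain A e where A: "0 \<le> A" "\<And>j. b i j \<le> A * (1 + real j) ^ e" by blast
  define F where "F j = R + E * (1 + A * (1 + real j) ^ e + R) ^ (kk + 1)" for j
  have F_mono: "F j \<le> F (Suc j)" for j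
    unfolding F_def using A(1) E(1) R0
    by (intro add_left_mono mult_left_mono power_mono add_right_mono) auto
  have F0: "0 \<le> F j" for j unfolding F_def using A(1) E(1) R0 by auto
  have 1: "b (Suc i) j \<le> real j * F j" for j
  proof (induction j)
    case (Suc j)
    have "b (Suc i) (Suc j) = b (Suc i) j + R + E * (1 + b i j + R) ^ (kk + 1)" by simp
    also have "\<dots> \<le> real j * F j + F j"
    proof -
      have "E * (1 + b i j + R) ^ (kk + 1) \<le> E * (1 + A * (1 + real j) ^ e + R) ^ (kk + 1)"
        using A b_nonneg[of i j] E(1) R0 by (intro mult_left_mono power_mono) auto
      then show ?thesis using Suc.IH unfolding F_def by linarith
    qed
    also have "\<dots> \<le> real j * F (Suc j) + F (Suc j)"
      using F_mono[of j] by (intro add_mono mult_left_mono) auto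
    finally show ?case by (simp add: algebra_simps)
  qed simp
  define G where "G = R + E * (1 + A + R) ^ (kk + 1)"
  have G0: "0 \<le> G" unfolding G_def using A(1) E(1) R0 by auto
  have 2: "F j \<le> G * (1 + real j) ^ (e * (kk + 1))" for j
  proof -
    have p1: "1 \<le> (1 + real j) ^ e" by simp
    have "1 + A * (1 + real j) ^ e + R \<le> (1 + A + R) * (1 + real j) ^ e"
    proof -
      have "R * 1 \<le> R * (1 + real j) ^ e" using mult_left_mono[OF p1 R0] .
      moreover have "(1 + A + R) * (1 + real j) ^ e = (1 + real j) ^ e + A * (1 + real j) ^ e + R * (1 + real j) ^ e"
        by (simp add: algebra_simps)
      ultimately show ?thesis using p1 by linarith
    qed
    then have "(1 + A * (1 + real j) ^ e + R) ^ (kk + 1) \<le> ((1 + A + R) * (1 + real j) ^ e) ^ (kk + 1)"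
      using A(1) R0 by (intro power_mono) auto
    also have "\<dots> = (1 + A + R) ^ (kk + 1) * (1 + real j) ^ (e * (kk + 1))"
      by (simp only: power_mult_distrib power_mult)
    finally have "E * (1 + A * (1 + real j) ^ e + R) ^ (kk + 1) \<le> E * ((1 + A + R) ^ (kk + 1) * (1 + real j) ^ (e * (kk + 1)))"
      using E(1) by (intro mult_left_mono)
    moreover have "R * 1 \<le> R * (1 + real j) ^ (e * (kk + 1))"
      using R0 by (intro mult_left_mono) auto
    ultimately show ?thesis unfolding F_def G_def by (simp add: algebra_simps)
  qed
  have "b (Suc i) j \<le> G * (1 + real j) ^ (e * (kk + 1) + 1)" for j
  proof -
    have "b (Suc i) j \<le> real j * F j" by (rule 1)
    also have "\<dots> \<le> (1 + real j) * (G * (1 + real j) ^ (e * (kk + 1)))"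
      using 2[of j] F0[of j] by (intro mult_mono) auto
    also have "\<dots> = G * (1 + real j) ^ (e * (kk + 1) + 1)" by (simp add: algebra_simps)
    finally show ?thesis .
  qed
  then show ?case using G0 by blast
qed

lemma N_growth: "\<exists>A e. 0 \<le> A \<and> (\<forall>j g. g \<in> setpow br W j \<longrightarrow> fst g = 0 \<and> snd g \<in> N \<and> norm (snd g) \<le> A * (1 + real j) ^ e)"
proof -
  obtain A e where A: "0 \<le> A" "\<And>j. b kk j \<le> A * (1 + real j) ^ e" using b_poly by blast
  have "fst g = 0 \<and> snd g \<in> N \<and> norm (snd g) \<le> A * (1 + real j) ^ e" if "g \<in> setpow br W j" for j g
  proof -
    from setpowW[OF that] obtain c where "fst g = 0" "snd g \<in> N" "c \<in> C kk" "norm (snd g - c) \<le> b kk j"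
      by blast
    then show ?thesis using C_kk A(2)[of j] by auto
  qed
  then show ?thesis using A(1) by blast
qed

end

lemma linear_iter:
  fixes A :: "'a::real_vector \<Rightarrow> 'a"
  shows "linear A \<Longrightarrow> linear (A ^^ k)"
proof (induction k)
  case 0
  then show ?case using linear_id by (metis funpow_0 id_apply eq_id_iff)
next
  case (Suc k)
  then show ?case using linear_compose[of "A ^^ k" A] by (simp add: o_def)
qed

lemma iter_bound:
  fixes A :: "'a::euclidean_space \<Rightarrow> 'a"
  assumes "linear A"
  shows "norm ((A ^^ k) y) \<le> onorm A ^ k * norm y"
proof (induction k)
  case (Suc k)
  have bl: "bounded_linear A" using assms linear_conv_bounded_linear by blast
  have "norm ((A ^^ Suc k) y) = norm (A ((A ^^ k) y))" by simp
  also have "\<dots> \<le> onorm A * norm ((A ^^ k) y)" by (rule onorm[OF bl])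
  also have "\<dots> \<le> onorm A * (onorm A ^ k * norm y)"
    using Suc onorm_pos_le[OF bl] by (rule mult_left_mono)
  finally show ?case by (simp add: mult.assoc)
qed simp

lemma expop_summable:
  fixes A :: "'a::euclidean_space \<Rightarrow> 'a"
  assumes "linear A"
  shows "summable (\<lambda>k. (1 / fact k) *\<^sub>R (A ^^ k) y)"
proof (rule summable_comparison_test')
  show "summable (\<lambda>k. inverse (fact k) * onorm A ^ k * norm y)"
    using summable_exp[of "onorm A"] by (rule summable_mult2)
  fix k :: nat
  show "norm ((1 / fact k) *\<^sub>R (A ^^ k) y) \<le> inverse (fact k) * onorm A ^ k * norm y"
    using iter_bound[OF assms, of k y] by (simp add: divide_inverse mult.assoc mult_left_mono)
qed

lemma expop_linear:
  fixes A :: "'a::euclidean_space \<Rightarrow> 'a"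
  assumes "linear A"
  shows "linear (expop A)"
proof (rule linearI)
  fix x y
  have "expop A (x + y) = (\<Sum>k. (1 / fact k) *\<^sub>R (A ^^ k) x + (1 / fact k) *\<^sub>R (A ^^ k) y)"
    unfolding expop_def using linear_add[OF linear_iter[OF assms]] by (simp add: scaleR_add_right)
  also have "\<dots> = expop A x + expop A y"
    unfolding expop_def by (rule suminf_add[symmetric]) (use expop_summable[OF assms] in auto)
  finally show "expop A (x + y) = expop A x + expop A y" .
next
  fix c :: real and x
  have "expop A (c *\<^sub>R x) = (\<Sum>k. c *\<^sub>R ((1 / fact k) *\<^sub>R (A ^^ k) x))"
    unfolding expop_def using linear_scale[OF linear_iter[OF assms]] by (simp add: ac_simps)
  also have "\<dots> = c *\<^sub>R expop A x"
    unfolding expop_def using suminf_scaleR_right[OF expop_summable[OF assms, of x], of c] by simp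
  finally show "expop A (c *\<^sub>R x) = c *\<^sub>R expop A x" .
qed

lemma expop_bl:
  fixes A :: "'a::euclidean_space \<Rightarrow> 'a"
  assumes "linear A"
  shows "bounded_linear (expop A)"
  using expop_linear[OF assms] linear_conv_bounded_linear by blast

locale decomp = nilp br N for br :: "'g::euclidean_space \<Rightarrow> 'g \<Rightarrow> 'g" and N +
  fixes T :: "'g set"
  assumes T_sub: "subspace T" and TN: "T \<inter> N = {0}"
    and TNU: "{t + n | t n. t \<in> T \<and> n \<in> N} = UNIV"
begin

lemma decomp_ex: "\<exists>t. t \<in> T \<and> z - t \<in> N"
proof -
  have "z \<in> {t + n | t n. t \<in> T \<and> n \<in> N}" using TNU by simp
  then obtain t n where "z = t + n" "t \<in> T" "n \<in> N" by blast
  then show ?thesis by (intro exI[of _ t]) auto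
qed

lemma decomp_uniq: "t \<in> T \<Longrightarrow> z - t \<in> N \<Longrightarrow> t' \<in> T \<Longrightarrow> z - t' \<in> N \<Longrightarrow> t = t'"
proof -
  assume a: "t \<in> T" "z - t \<in> N" "t' \<in> T" "z - t' \<in> N"
  have "t - t' \<in> T" using a subspace_diff[OF T_sub] by blast
  moreover have "(z - t') - (z - t) \<in> N" using a subspace_diff[OF N_sub] by blast
  ultimately have "t - t' \<in> T \<inter> N" by simp
  then show "t = t'" using TN by simp
qed

lemma proj_unique: "t \<in> T \<Longrightarrow> z - t \<in> N \<Longrightarrow> projT T N z = t"
  unfolding projT_def by (rule the_equality) (use decomp_uniq in blast)+

lemma proj_T: "projT T N z \<in> T" and proj_N: "z - projT T N z \<in> N"
  using decomp_ex[of z] proj_unique by auto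

lemma proj_linear: "linear (projT T N)"
proof (rule linearI)
  fix x y
  show "projT T N (x + y) = projT T N x + projT T N y"
  proof (rule proj_unique)
    show "projT T N x + projT T N y \<in> T" using proj_T subspace_add[OF T_sub] by blast
    have "(x - projT T N x) + (y - projT T N y) \<in> N" using proj_N subspace_add[OF N_sub] by blast
    then show "x + y - (projT T N x + projT T N y) \<in> N" by (simp add: algebra_simps)
  qed
next
  fix c :: real and x
  show "projT T N (c *\<^sub>R x) = c *\<^sub>R projT T N x"
  proof (rule proj_unique)
    show "c *\<^sub>R projT T N x \<in> T" using proj_T subspace_scale[OF T_sub] by blast
    have "c *\<^sub>R (x - projT T N x) \<in> N" using proj_N subspace_scale[OF N_sub] by blast
    then show "c *\<^sub>R x - c *\<^sub>R projT T N x \<in> N" by (simp add: scaleR_diff_right)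
  qed
qed

lemma proj_bound: "\<exists>K>0. \<forall>z. norm (projT T N z) \<le> norm z * K"
  using proj_linear linear_conv_bounded_linear bounded_linear.pos_bounded by blast

lemma pow_brN: "n \<in> N \<Longrightarrow> ((br n) ^^ Suc j) y \<in> C j"
proof (induction j)
  case 0
  then show ?case using N_br_l by simp
next
  case (Suc j)
  then show ?case using C_br by simp
qed

lemma expop_N: assumes "n \<in> N" shows "expop (br n) y - y \<in> N"
proof -
  have "expop (br n) y = (\<Sum>k<Suc kk. (1 / fact k) *\<^sub>R ((br n) ^^ k) y)"
  proof (rule expop_finite[OF LA])
    fix k assume "Suc kk \<le> k"
    then obtain j where "k = Suc j" "kk \<le> j" by (cases k) auto
    then show "((br n) ^^ k) y = 0" using pow_brN[OF assms, of j] C_zero by auto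
  qed
  also have "\<dots> = y + (\<Sum>k<kk. (1 / fact (Suc k)) *\<^sub>R ((br n) ^^ Suc k) y)"
    by (subst sum.lessThan_Suc_shift) simp
  finally have "expop (br n) y - y = (\<Sum>k<kk. (1 / fact (Suc k)) *\<^sub>R ((br n) ^^ Suc k) y)" by simp
  also have "\<dots> \<in> N"
    by (intro subspace_sum[OF N_sub] subspace_scale[OF N_sub]) (use pow_brN[OF assms] C_N in blast)
  finally show ?thesis .
qed

lemma expop_kill: assumes "br n v = 0" shows "expop (br n) v = v"
proof -
  have z: "((br n) ^^ Suc j) v = 0" for j
    by (induction j) (use assms br_0r[OF LA] in auto)
  have "expop (br n) v = (\<Sum>k<1. (1 / fact k) *\<^sub>R ((br n) ^^ k) v)"
  proof (rule expop_finite[OF LA])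
    fix k :: nat assume "1 \<le> k"
    then obtain j where "k = Suc j" by (cases k) auto
    then show "((br n) ^^ k) v = 0" using z by simp
  qed
  then show ?thesis by simp
qed

lemma center_ex: "\<exists>v. v \<noteq> 0 \<and> (\<forall>m\<in>N. br m v = 0)"
proof (cases "N = {0}")
  case True
  obtain v :: 'g where "v \<in> Basis" using SOME_Basis by blast
  then have "v \<noteq> 0" using nonzero_Basis by blast
  then show ?thesis using True br_0l[OF LA] by auto
next
  case False
  define i0 where "i0 = (LEAST i. C i = {0})"
  have ci0: "C i0 = {0}" unfolding i0_def by (rule LeastI[of _ kk]) (rule C_kk)
  have "i0 \<noteq> 0"
  proof
    assume "i0 = 0"
    then have "N = {0}" using ci0 by simp
    then show False using False by simp
  qed
  then obtain i where i: "i0 = Suc i" by (cases i0) auto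
  have "C i \<noteq> {0}"
  proof
    assume "C i = {0}"
    then have "i0 \<le> i" unfolding i0_def by (rule Least_le)
    then show False using i by simp
  qed
  moreover have "0 \<in> C i" using subspace_0[OF C_subspace, of i] .
  ultimately have "\<exists>v. v \<in> C i \<and> v \<noteq> 0" by auto
  then obtain v where v: "v \<in> C i" "v \<noteq> 0" by blast
  have "\<forall>m\<in>N. br m v = 0"
  proof
    fix m assume "m \<in> N"
    then have "br m v \<in> C (Suc i)" using C_br v(1) by blast
    then show "br m v = 0" using ci0 i by simp
  qed
  then show ?thesis using v by blast
qed

end


context decomp
begin

lemma Adg_bl: "bounded_linear (Adg br g)"
  unfolding Adg_def o_def
  by (rule bounded_linear_compose[OF expop_bl expop_bl]) (rule br_lin_r[OF LA])+

lemma Ad_lower: "\<exists>c>0. \<forall>t\<in>T. \<forall>n\<in>N. c \<le> onorm (Adg br (t, n))"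
proof -
  obtain K where K: "K > 0" "\<And>z. norm (projT T N z) \<le> norm z * K" using proj_bound by blast
  obtain v where v: "v \<noteq> 0" "\<And>m. m \<in> N \<Longrightarrow> br m v = 0" using center_ex by blast
  define c where "c = min 1 (1 / K)"
  have c0: "c > 0" unfolding c_def using K by simp
  have "c \<le> onorm (Adg br (t, n))" if t: "t \<in> T" and n: "n \<in> N" for t n
  proof -
    have bl: "bounded_linear (Adg br (t, n))" by (rule Adg_bl)
    show ?thesis
    proof (cases "t = 0")
      case True
      have "Adg br (t, n) v = v"
        unfolding Adg_def True using expop_br0[OF LA] expop_kill[OF v(2)[OF n]] by simp
      then have "norm v \<le> onorm (Adg br (t, n)) * norm v" using onorm[OF bl, of v] by simp
      then have "1 \<le> onorm (Adg br (t, n))" using v(1) by simp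
      then show ?thesis unfolding c_def by simp
    next
      case False
      define w where "w = expop (br n) t"
      have "Adg br (t, n) t = w"
        unfolding Adg_def w_def using expop_kill[of t t] br_xx[OF LA] by simp
      have "w - t \<in> N" unfolding w_def by (rule expop_N[OF n])
      then have "projT T N w = t" using proj_unique t by blast
      then have "norm t \<le> norm w * K" using K(2)[of w] by simp
      also have "\<dots> \<le> onorm (Adg br (t, n)) * norm t * K"
        using onorm[OF bl, of t] \<open>Adg br (t, n) t = w\<close> K(1) by (intro mult_right_mono) auto
      finally have "1 * norm t \<le> (onorm (Adg br (t, n)) * K) * norm t" by (simp add: ac_simps)
      then have "1 \<le> onorm (Adg br (t, n)) * K" using False by (simp add: mult_le_cancel_right)
      then have "1 / K \<le> onorm (Adg br (t, n))" using K(1) by (simp add: field_simps)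
      then show ?thesis unfolding c_def by simp
    qed
  qed
  then show ?thesis using c0 by blast
qed

end

context
  fixes br :: "'g::euclidean_space \<Rightarrow> 'g \<Rightarrow> 'g"
  assumes LA: "lie_algebra br"
begin

lemma setpow_SucI: "h \<in> setpow br X n \<Longrightarrow> u \<in> X \<Longrightarrow> gmult br h u \<in> setpow br X (Suc n)"
  unfolding setpow.simps by blast

lemma setpow_line: "(0, a) \<in> X \<Longrightarrow> (0, real i *\<^sub>R a) \<in> setpow br X i"
proof (induction i)
  case 0
  then show ?case by simp
next
  case (Suc i)
  have "gmult br (0, real i *\<^sub>R a) (0, a) = (0, cbh br (real i *\<^sub>R a) (1 *\<^sub>R a))"
    unfolding gmult_def using LA by simp
  also have "\<dots> = (0, real (Suc i) *\<^sub>R a)" using cbh_collinear[OF LA, of "real i" a 1] by simp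
  finally show ?case using setpow_SucI[OF Suc.IH[OF Suc.prems] Suc.prems] by simp
qed

lemma setpow_Tline:
  assumes "(0, m) \<in> setpow br X j" "(s, 0) \<in> X"
  shows "(real i *\<^sub>R s, m) \<in> setpow br X (j + i)"
proof (induction i)
  case 0
  then show ?case using assms by simp
next
  case (Suc i)
  have P: "Pcbh br (real i *\<^sub>R s) (1 *\<^sub>R s) = 0" by (rule Pcbh_collinear[OF LA])
  have "gmult br (real i *\<^sub>R s, m) (s, 0) = (real (Suc i) *\<^sub>R s, m)"
    unfolding gmult_def using LA P by (simp add: scaleR_add_left algebra_simps)
  then show ?case using setpow_SucI[OF Suc.IH assms(2)] by simp
qed

lemma setpow_fst:
  assumes "\<And>u. u \<in> X \<Longrightarrow> norm (fst u) \<le> R"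
  shows "g \<in> setpow br X j \<Longrightarrow> norm (fst g) \<le> real j * R"
proof (induction j arbitrary: g)
  case 0
  then show ?case by simp
next
  case (Suc j)
  then obtain h u where "g = gmult br h u" "h \<in> setpow br X j" "u \<in> X" by auto
  then have "fst g = fst h + fst u" "norm (fst h) \<le> real j * R" "norm (fst u) \<le> R"
    using Suc.IH assms by (auto simp: gmult_def)
  then show ?case using norm_triangle_ineq[of "fst h" "fst u"] by (simp add: algebra_simps)
qed

end

locale full = decomp br N T for br :: "'g::euclidean_space \<Rightarrow> 'g \<Rightarrow> 'g" and N T +
  fixes U :: "('g \<times> 'g) set"
  assumes U_sub: "U \<subseteq> T \<times> N" and U_cpt: "compact U"
    and U_nbhd: "\<exists>V. open V \<and> (0, 0) \<in> V \<and> V \<inter> (T \<times> N) \<subseteq> U"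
begin

definition "W = U \<inter> ({0} \<times> N)"

lemma small_in_U: "\<exists>\<epsilon>>0. \<forall>s m. s \<in> T \<longrightarrow> m \<in> N \<longrightarrow> norm (s, m) < \<epsilon> \<longrightarrow> (s, m) \<in> U"
proof -
  obtain V where V: "open V" "(0, 0) \<in> V" "V \<inter> (T \<times> N) \<subseteq> U" using U_nbhd by blast
  then obtain \<epsilon> where e: "\<epsilon> > 0" "ball (0, 0) \<epsilon> \<subseteq> V" using open_contains_ball by blast
  have "(s, m) \<in> U" if "s \<in> T" "m \<in> N" "norm (s, m) < \<epsilon>" for s m
  proof -
    have "(s, m) \<in> ball (0, 0) \<epsilon>" using that(3) by (simp add: dist_norm norm_Pair)
    then show ?thesis using e V that by blast
  qed
  then show ?thesis using e by blast
qed

lemma gen_N: assumes "m \<in> N" shows "\<exists>j. (0, m) \<in> setpow br W j"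
proof -
  obtain \<epsilon> where e: "\<epsilon> > 0" "\<And>s m. s \<in> T \<Longrightarrow> m \<in> N \<Longrightarrow> norm (s, m) < \<epsilon> \<Longrightarrow> (s, m) \<in> U"
    using small_in_U by blast
  obtain j :: nat where j: "norm m / \<epsilon> < real j" using reals_Archimedean2 by blast
  then have j0: "real j > 0" using e(1) by (smt (verit) divide_nonneg_pos norm_ge_zero)
  define a where "a = (1 / real j) *\<^sub>R m"
  have aN: "a \<in> N" unfolding a_def using assms subspace_scale[OF N_sub] by blast
  have "norm a = norm m / real j" unfolding a_def using j0 by simp
  also have "\<dots> < \<epsilon>" using j j0 e(1) by (simp add: field_simps)
  finally have "norm (0::'g, a) < \<epsilon>" by (simp add: norm_Pair)
  then have "(0, a) \<in> U" using e(2)[OF subspace_0[OF T_sub] aN] by blast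
  then have "(0, a) \<in> W" unfolding W_def using aN by simp
  then have "(0, real j *\<^sub>R a) \<in> setpow br W j" by (rule setpow_line[OF LA])
  moreover have "real j *\<^sub>R a = m" unfolding a_def using j0 by simp
  ultimately show ?thesis by auto
qed

lemma gen_G: assumes "t \<in> T" "m \<in> N" shows "\<exists>j. (t, m) \<in> setpow br U j"
proof -
  obtain \<epsilon> where e: "\<epsilon> > 0" "\<And>s m. s \<in> T \<Longrightarrow> m \<in> N \<Longrightarrow> norm (s, m) < \<epsilon> \<Longrightarrow> (s, m) \<in> U"
    using small_in_U by blast
  obtain j1 where "(0, m) \<in> setpow br W j1" using gen_N[OF assms(2)] by blast
  moreover have "setpow br W j \<subseteq> setpow br U j" for j
  proof (induction j)
    case (Suc j)
    show ?case
    proof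
      fix g assume "g \<in> setpow br W (Suc j)"
      then obtain h u where "g = gmult br h u" "h \<in> setpow br W j" "u \<in> W" by auto
      then show "g \<in> setpow br U (Suc j)" using Suc setpow_SucI[OF LA, of h U j u] by (auto simp: W_def)
    qed
  qed simp
  ultimately have m1: "(0, m) \<in> setpow br U j1" by blast
  obtain j :: nat where j: "norm t / \<epsilon> < real j" using reals_Archimedean2 by blast
  then have j0: "real j > 0" using e(1) by (smt (verit) divide_nonneg_pos norm_ge_zero)
  define s where "s = (1 / real j) *\<^sub>R t"
  have sT: "s \<in> T" unfolding s_def using assms subspace_scale[OF T_sub] by blast
  have "norm s = norm t / real j" unfolding s_def using j0 by simp
  also have "\<dots> < \<epsilon>" using j j0 e(1) by (simp add: field_simps)
  finally have "norm (s, 0::'g) < \<epsilon>" by (simp add: norm_Pair)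
  then have "(s, 0) \<in> U" using e(2)[OF sT subspace_0[OF N_sub]] by blast
  then have "(real j *\<^sub>R s, m) \<in> setpow br U (j1 + j)" by (rule setpow_Tline[OF LA m1])
  moreover have "real j *\<^sub>R s = t" unfolding s_def using j0 by simp
  ultimately show ?thesis by auto
qed

lemma wl_G: "t \<in> T \<Longrightarrow> m \<in> N \<Longrightarrow> (t, m) \<in> setpow br U (wordlen br U (t, m))"
  unfolding wordlen_def by (rule LeastI_ex, rule gen_G)

lemma wl_N: "m \<in> N \<Longrightarrow> (0, m) \<in> setpow br W (wordlen br W (0, m))"
  unfolding wordlen_def by (rule LeastI_ex, rule gen_N)

lemma U_bounded: "\<exists>R\<ge>0. \<forall>u\<in>U. norm (fst u) \<le> R \<and> norm (snd u) \<le> R"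
proof -
  obtain R where R: "\<forall>u\<in>U. norm u \<le> R" using compact_imp_bounded[OF U_cpt] bounded_iff by blast
  have "norm (fst u) \<le> max R 0 \<and> norm (snd u) \<le> max R 0" if "u \<in> U" for u
  proof -
    have "norm u \<le> R" using R that by blast
    obtain a b where u: "u = (a, b)" by fastforce
    have "norm a \<le> norm (a, b)" by (rule norm_fst_le)
    moreover have "norm b \<le> norm (a, b)" by (rule norm_snd_le)
    ultimately show ?thesis using \<open>norm u \<le> R\<close> u by auto
  qed
  then show ?thesis by (intro exI[of _ "max R 0"]) auto
qed

lemma sigma_bound:
  "\<exists>\<kappa>>0. \<exists>p. \<forall>z. \<kappa> * (\<Prod>b\<in>Basis. (1 + \<bar>z \<bullet> b\<bar>) ^ 2) \<le> sigma br T N U (projT T N z, z - projT T N z) ^ p"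
proof -
  obtain R where R: "R \<ge> 0" "\<And>u. u \<in> U \<Longrightarrow> norm (fst u) \<le> R \<and> norm (snd u) \<le> R"
    using U_bounded by blast
  interpret NW: nilpW br N W R
    by unfold_locales (use R in \<open>auto simp: W_def\<close>)
  obtain A e where A: "0 \<le> A" "\<And>j g. g \<in> setpow br W j \<Longrightarrow> fst g = 0 \<and> snd g \<in> N \<and> norm (snd g) \<le> A * (1 + real j) ^ e"
    using NW.N_growth by blast
  obtain c where c: "c > 0" "\<And>t n. t \<in> T \<Longrightarrow> n \<in> N \<Longrightarrow> c \<le> onorm (Adg br (t, n))"
    using Ad_lower by blast
  define q where "q = e + 1"
  define D where "D = DIM('g)"
  define p where "p = q * (2 * D)"
  define \<kappa> where "\<kappa> = c ^ p / (1 + R + A) ^ (2 * D)"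
  have \<kappa>0: "\<kappa> > 0" unfolding \<kappa>_def using c(1) R(1) A(1) by simp
  have "\<kappa> * (\<Prod>b\<in>Basis. (1 + \<bar>z \<bullet> b\<bar>) ^ 2) \<le> sigma br T N U (projT T N z, z - projT T N z) ^ p" for z
  proof -
    define t where "t = projT T N z"
    define n where "n = z - t"
    have tT: "t \<in> T" and nN: "n \<in> N" unfolding t_def n_def using proj_T proj_N by auto
    define jG where "jG = wordlen br U (t, n)"
    define jN where "jN = wordlen br W (0, n)"
    define S where "S = 1 + real jG + real jN"
    have S1: "1 \<le> S" unfolding S_def by simp
    have sig: "sigma br T N U (t, n) = max (onorm (Adg br (t, n))) (onorm (Adg br (ginv br T N (t, n)))) * S"
      unfolding sigma_def S_def jG_def jN_def W_def by simp
    have h1: "c * S \<le> sigma br T N U (t, n)"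
      unfolding sig using c(2)[OF tT nN] S1 by (intro mult_right_mono) auto
    have h2: "norm t \<le> real jG * R"
      using setpow_fst[OF LA, of U R, OF _ wl_G[OF tT nN]] R(2) unfolding jG_def by simp
    have h3: "norm n \<le> A * (1 + real jN) ^ e"
      using A(2)[OF wl_N[OF nN]] unfolding jN_def by simp
    have Sq: "S \<le> S ^ q" "1 \<le> S ^ q" "S ^ e \<le> S ^ q"
      using power_increasing[of 1 q S] power_increasing[of e q S] one_le_power[OF S1, of q] S1
      unfolding q_def by auto
    have "real jG * R \<le> S * R" unfolding S_def using R(1) by (intro mult_right_mono) auto
    also have "\<dots> \<le> S ^ q * R" using Sq R(1) by (intro mult_right_mono) auto
    finally have h2': "norm t \<le> R * S ^ q" using h2 by (simp add: ac_simps)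
    have "A * (1 + real jN) ^ e \<le> A * S ^ e" unfolding S_def using A(1) by (intro mult_left_mono power_mono) auto
    also have "\<dots> \<le> A * S ^ q" using Sq A(1) by (intro mult_left_mono) auto
    finally have h3': "norm n \<le> A * S ^ q" using h3 by simp
    have "norm z \<le> norm t + norm n" unfolding n_def using norm_triangle_ineq[of t "z - t"] by simp
    then have h4: "1 + norm z \<le> (1 + R + A) * S ^ q" using h2' h3' Sq by (simp add: algebra_simps)
    have "(\<Prod>b\<in>Basis. (1 + \<bar>z \<bullet> b\<bar>) ^ 2) \<le> (\<Prod>b\<in>(Basis::'g set). (1 + norm z) ^ 2)"
      by (intro prod_mono conjI power_mono) (auto simp: Basis_le_norm)
    also have "\<dots> = (1 + norm z) ^ (2 * D)" unfolding D_def by (simp add: power_mult[symmetric] mult.commute)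
    also have "\<dots> \<le> ((1 + R + A) * S ^ q) ^ (2 * D)" using h4 by (intro power_mono) auto
    also have "\<dots> = (1 + R + A) ^ (2 * D) * S ^ p" unfolding p_def by (simp add: power_mult_distrib power_mult)
    finally have h5: "(\<Prod>b\<in>Basis. (1 + \<bar>z \<bullet> b\<bar>) ^ 2) \<le> (1 + R + A) ^ (2 * D) * S ^ p" .
    have "\<kappa> * (\<Prod>b\<in>Basis. (1 + \<bar>z \<bullet> b\<bar>) ^ 2) \<le> \<kappa> * ((1 + R + A) ^ (2 * D) * S ^ p)"
      using h5 \<kappa>0 by (intro mult_left_mono) auto
    also have "\<dots> = (c * S) ^ p" unfolding \<kappa>_def using R(1) A(1) by (simp add: power_mult_distrib)
    also have "\<dots> \<le> sigma br T N U (t, n) ^ p" using h1 c(1) S1 by (intro power_mono) auto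
    finally show ?thesis unfolding t_def n_def by simp
  qed
  then show ?thesis using \<kappa>0 by blast
qed

end


lemma int_1d: "(\<integral>\<^sup>+ x. ennreal (1 / (1 + \<bar>x\<bar>) ^ 2) \<partial>lborel) < \<infinity>"
proof -
  have "set_integrable lborel (einterval (-\<infinity>) \<infinity>) (\<lambda>x::real. inverse (1 + x^2))"
    by (rule integrable_inverse_1_plus_square)
  then have "integrable lborel (\<lambda>x::real. inverse (1 + x^2))"
    by (simp add: set_integrable_def)
  then have "(\<integral>\<^sup>+ x. ennreal (norm (inverse (1 + (x::real)^2))) \<partial>lborel) < \<infinity>"
    unfolding integrable_iff_bounded by (rule conjunct2)
  moreover have "(\<integral>\<^sup>+ x. ennreal (1 / (1 + \<bar>x\<bar>) ^ 2) \<partial>lborel) \<le> (\<integral>\<^sup>+ x. ennreal (norm (inverse (1 + (x::real)^2))) \<partial>lborel)"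
  proof (rule nn_integral_mono)
    fix x :: real
    have "1 + x^2 \<le> (1 + \<bar>x\<bar>)^2" by (simp add: power2_eq_square algebra_simps)
    then have "1 / (1 + \<bar>x\<bar>) ^ 2 \<le> inverse (1 + x^2)"
      by (simp add: divide_simps power_divide[symmetric] add_pos_nonneg)
    then show "ennreal (1 / (1 + \<bar>x\<bar>) ^ 2) \<le> ennreal (norm (inverse (1 + x^2)))"
      by (simp add: ennreal_leI add_pos_nonneg)
  qed
  ultimately show ?thesis by (meson order.strict_trans1)
qed

lemma int_prod:
  "(\<integral>\<^sup>+ z. ennreal (\<Prod>b\<in>Basis. 1 / (1 + \<bar>z \<bullet> b\<bar>) ^ 2) \<partial>(lborel :: 'a::euclidean_space measure)) < \<infinity>"
proof -
  have "(\<integral>\<^sup>+ z. ennreal (\<Prod>b\<in>Basis. 1 / (1 + \<bar>z \<bullet> b\<bar>) ^ 2) \<partial>(lborel :: 'a measure))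
      = (\<integral>\<^sup>+ z. (\<Prod>b\<in>(Basis::'a set). ennreal (1 / (1 + \<bar>z \<bullet> b\<bar>) ^ 2)) \<partial>lborel)"
    by (simp add: prod_ennreal)
  also have "\<dots> = (\<Prod>b\<in>(Basis::'a set). (\<integral>\<^sup>+ x. ennreal (1 / (1 + \<bar>x\<bar>) ^ 2) \<partial>lborel))"
    by (rule nn_integral_lborel_prod) auto
  also have "\<dots> < \<infinity>" using int_1d by (simp add: power_less_top_ennreal)
  finally show ?thesis .
qed


theorem mainTheorem2:
  fixes br :: "'g::euclidean_space \<Rightarrow> 'g \<Rightarrow> 'g"
    and N T :: "'g set" and X :: 'g and U :: "('g \<times> 'g) set"
  assumes "lie_algebra br"
    and "solvable_lie br"
    and "nilradical br N"
    and "\<forall>lam mu. is_root br lam \<and> is_root br mu \<and> lam \<noteq> mu \<longrightarrow> lam X \<noteq> mu X"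
    and "subspace T" and "T \<subseteq> gzero br X"
    and "T \<inter> N = {0}" and "{t + n | t n. t \<in> T \<and> n \<in> N} = UNIV"
    and "sym_compact_nbhd br T N U"
  shows "\<exists>p::nat. (\<integral>\<^sup>+ z. ennreal (1 / sigma br T N U (projT T N z, z - projT T N z) ^ p) \<partial>lborel) < \<infinity>"
proof -
  interpret F: full br N T U
    by unfold_locales (use assms in \<open>auto simp: sym_compact_nbhd_def\<close>)
  obtain \<kappa> p where k: "\<kappa> > 0"
    "\<And>z. \<kappa> * (\<Prod>b\<in>Basis. (1 + \<bar>z \<bullet> b\<bar>) ^ 2) \<le> sigma br T N U (projT T N z, z - projT T N z) ^ p"
    using F.sigma_bound by blast
  define f where "f z = (\<Prod>b\<in>(Basis::'g set). 1 / (1 + \<bar>z \<bullet> b\<bar>) ^ 2)" for z :: 'g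
  have "(\<integral>\<^sup>+ z. ennreal (1 / sigma br T N U (projT T N z, z - projT T N z) ^ p) \<partial>lborel)
      \<le> (\<integral>\<^sup>+ z. ennreal (1 / \<kappa>) * ennreal (f z) \<partial>lborel)"
  proof (rule nn_integral_mono)
    fix z :: 'g
    define P where "P = (\<Prod>b\<in>(Basis::'g set). (1 + \<bar>z \<bullet> b\<bar>) ^ 2)"
    have P1: "P \<ge> 1" unfolding P_def by (intro prod_ge_1) auto
    have fz: "f z = 1 / P" unfolding f_def P_def by (simp add: prod_dividef)
    have le: "\<kappa> * P \<le> sigma br T N U (projT T N z, z - projT T N z) ^ p" using k(2) unfolding P_def .
    have pos: "0 < \<kappa> * P" using k(1) P1 by simp
    have "1 / sigma br T N U (projT T N z, z - projT T N z) ^ p \<le> 1 / (\<kappa> * P)"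
      using le pos by (intro divide_left_mono) auto
    also have "\<dots> = (1 / \<kappa>) * f z" unfolding fz by simp
    finally have ineq: "1 / sigma br T N U (projT T N z, z - projT T N z) ^ p \<le> (1 / \<kappa>) * f z" .
    have "ennreal ((1 / \<kappa>) * f z) = ennreal (1 / \<kappa>) * ennreal (f z)"
      using k(1) P1 fz by (intro ennreal_mult) auto
    then show "ennreal (1 / sigma br T N U (projT T N z, z - projT T N z) ^ p) \<le> ennreal (1 / \<kappa>) * ennreal (f z)"
      using ennreal_leI[OF ineq] by simp
  qed
  also have "\<dots> = ennreal (1 / \<kappa>) * (\<integral>\<^sup>+ z. ennreal (f z) \<partial>lborel)"
    by (rule nn_integral_cmult) (simp add: f_def)
  also have "\<dots> < \<infinity>"
    using int_prod[where 'a='g] unfolding f_def by (simp add: ennreal_mult_less_top)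
  finally show ?thesis by blast
qed

end
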